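(* Let $K>0$, $\psi>0$, $E_{\max}>0$, $C>0$, and define, for $Q>\max\{1,C/E_{\max}\}$, $$\beta(Q)=K\sqrt{\frac{(e^{\psi Q}-e^{\psi})^3}{E_{\max}-C/Q}}.$$ On any interval of such $Q$ on which $3\psi^2e^{\psi}Q^2-2QE_{\max}+C\ge 0$ holds, the function $\beta$ is convex. Consequently, for every fixed $\kappa>0$ and $\varrho\in(0,1)$, the $\varrho$-quantile of $\mathrm{Gamma}(\kappa,\beta(Q))$ (shape $\kappa$, scale $\beta(Q)$) is a convex function of $Q$ on that interval.
   Context: For a Gamma distribution with shape $\kappa$ and scale $\beta$, the $\varrho$-quantile is $\beta\cdot\gamma^{-1}(\kappa,\Gamma(\kappa)\varrho)$. Here $\gamma(s,x)=\int_0^x t^{s-1}e^{-t}\,dt$ is the lower incomplete gamma function, $\gamma^{-1}$ denotes its inverse in the second argument, and $\Gamma$ is the Gamma function. *)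

theory Defs
  imports "HOL-Analysis.Analysis"
begin

definition lower_inc_gamma :: "real \<Rightarrow> real \<Rightarrow> real" where
  "lower_inc_gamma s x = integral {0..x} (\<lambda>t. t powr (s - 1) * exp (- t))"

text \<open>Inverse of the lower incomplete gamma function in its second argument
  (on x >= 0, where it is strictly increasing).\<close>
definition inv_lower_inc_gamma :: "real \<Rightarrow> real \<Rightarrow> real" where
  "inv_lower_inc_gamma s y = (THE x. 0 \<le> x \<and> lower_inc_gamma s x = y)"

definition gamma_quantile :: "real \<Rightarrow> real \<Rightarrow> real \<Rightarrow> real" where
  "gamma_quantile \<kappa> \<beta> \<rho> = \<beta> * inv_lower_inc_gamma \<kappa> (Gamma \<kappa> * \<rho>)"

definition beta_fun :: "real \<Rightarrow> real \<Rightarrow> real \<Rightarrow> real \<Rightarrow> real \<Rightarrow> real" where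
  "beta_fun K \<psi> Emax C Q = K * sqrt ((exp (\<psi> * Q) - exp \<psi>) ^ 3 / (Emax - C / Q))"

end

theory Submission
  imports Defs
begin


lemma powr_deriv:
  fixes g :: "real \<Rightarrow> real"
  assumes "(g has_real_derivative m) (at x)" "g x > 0" "r' = r - 1"
  shows "((\<lambda>x. g x powr r) has_real_derivative (r * g x powr r' * m)) (at x)"
  using DERIV_fun_powr[OF assms(1,2), of r] assms(3) by simp

lemma u_deriv: "((\<lambda>Q. exp (\<psi>*Q) - exp \<psi>) has_real_derivative (\<psi> * exp (\<psi>*Q))) (at Q)"
  by (auto intro!: derivative_eq_intros)

lemma u'_deriv: "((\<lambda>Q. \<psi> * exp (\<psi>*Q)) has_real_derivative (\<psi> * (\<psi> * exp (\<psi>*Q)))) (at Q)"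
  by (auto intro!: derivative_eq_intros)

lemma v_deriv: "Q \<noteq> 0 \<Longrightarrow> ((\<lambda>Q. E - C/Q) has_real_derivative (C/Q^2)) (at Q)"
  by (auto intro!: derivative_eq_intros simp: power2_eq_square)

lemma v'_deriv: "Q \<noteq> 0 \<Longrightarrow> ((\<lambda>Q. C/Q^2) has_real_derivative (-2*C/Q^3)) (at Q)"
  by (auto intro!: derivative_eq_intros simp: field_simps eval_nat_numeral)

lemma a_d1:
  fixes \<psi> Q :: real
  assumes "exp (\<psi>*Q) - exp \<psi> > 0"
  shows "((\<lambda>Q. (exp (\<psi>*Q) - exp \<psi>) powr (3/2)) has_real_derivative
     (3/2 * (exp (\<psi>*Q) - exp \<psi>) powr (1/2) * (\<psi> * exp (\<psi>*Q)))) (at Q)"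
  by (rule powr_deriv[OF u_deriv assms]) simp

lemma a_d2:
  fixes \<psi> Q :: real
  assumes "exp (\<psi>*Q) - exp \<psi> > 0"
  shows "((\<lambda>Q. 3/2 * (exp (\<psi>*Q) - exp \<psi>) powr (1/2) * (\<psi> * exp (\<psi>*Q))) has_real_derivative
     (3/2 * (1/2 * (exp (\<psi>*Q) - exp \<psi>) powr (-1/2) * (\<psi> * exp (\<psi>*Q)) * (\<psi> * exp (\<psi>*Q))
       + (exp (\<psi>*Q) - exp \<psi>) powr (1/2) * (\<psi> * (\<psi> * exp (\<psi>*Q)))))) (at Q)"
proof -
  have "((\<lambda>Q. 3/2 * ((exp (\<psi>*Q) - exp \<psi>) powr (1/2) * (\<psi> * exp (\<psi>*Q)))) has_real_derivative
     (3/2 * ((exp (\<psi>*Q) - exp \<psi>) powr (1/2) * (\<psi> * (\<psi> * exp (\<psi>*Q))) + 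
       (1/2 * (exp (\<psi>*Q) - exp \<psi>) powr (-1/2) * (\<psi> * exp (\<psi>*Q))) * (\<psi> * exp (\<psi>*Q))))) (at Q)"
    by (intro DERIV_cmult DERIV_mult' powr_deriv[OF u_deriv assms] u'_deriv) simp
  from DERIV_cong[OF this] show ?thesis by (simp only: mult.assoc add.commute)
qed

lemma b_d1:
  fixes E C Q :: real
  assumes "E - C/Q > 0" "Q > 0"
  shows "((\<lambda>Q. (E - C/Q) powr (-1/2)) has_real_derivative
     (-1/2 * (E - C/Q) powr (-3/2) * (C/Q^2))) (at Q)"
  by (rule powr_deriv[OF v_deriv assms(1)]) (use assms in auto)

lemma b_d2:
  fixes E C Q :: real
  assumes "E - C/Q > 0" "Q > 0"
  shows "((\<lambda>Q. -1/2 * (E - C/Q) powr (-3/2) * (C/Q^2)) has_real_derivative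
     (3/4 * (E - C/Q) powr (-5/2) * (C/Q^2)^2 + (E - C/Q) powr (-3/2) * (C/Q^3))) (at Q)"
proof -
  have "((\<lambda>Q. -1/2 * ((E - C/Q) powr (-3/2) * (C/Q^2))) has_real_derivative
     (-1/2 * ((E - C/Q) powr (-3/2) * (-2*C/Q^3) + (-3/2 * (E - C/Q) powr (-5/2) * (C/Q^2)) * (C/Q^2)))) (at Q)"
    using assms by (intro DERIV_cmult DERIV_mult' powr_deriv[OF v_deriv] v'_deriv) auto
  moreover have "-1/2 * ((E - C/Q) powr (-3/2) * (-2*C/Q^3) + (-3/2 * (E - C/Q) powr (-5/2) * (C/Q^2)) * (C/Q^2))
    = 3/4 * (E - C/Q) powr (-5/2) * (C/Q^2)^2 + (E - C/Q) powr (-3/2) * (C/Q^3)"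
    by (simp add: power2_eq_square algebra_simps)
  ultimately have "((\<lambda>Q. -1/2 * ((E - C/Q) powr (-3/2) * (C/Q^2))) has_real_derivative
     (3/4 * (E - C/Q) powr (-5/2) * (C/Q^2)^2 + (E - C/Q) powr (-3/2) * (C/Q^3))) (at Q)" by (rule DERIV_cong)
  thus ?thesis by (simp only: mult.assoc)
qed


lemma prod_second_nonneg:
  fixes a a' a'' b b' b'' :: real
  assumes "a > 0" "b > 0" "3 * a * a'' \<ge> a'^2" "b * b'' \<ge> 3 * b'^2"
  shows "a'' * b + 2 * a' * b' + a * b'' \<ge> 0"
proof -
  have a'': "a'' \<ge> 0" using assms(1,3)
    by (smt (verit, best) mult_pos_neg zero_le_power2)
  have b'': "b'' \<ge> 0" using assms(2,4)
    by (smt (verit, best) mult_pos_neg zero_le_power2)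
  define x where "x = a'' * b"
  define y where "y = a * b''"
  have x: "x \<ge> 0" and y: "y \<ge> 0" using a'' b'' assms by (auto simp: x_def y_def)
  have "x * y = (a * a'') * (b * b'')" by (simp add: x_def y_def algebra_simps)
  also have "\<dots> \<ge> (a'^2/3) * (3 * b'^2)"
  proof (rule mult_mono)
    show "a'^2/3 \<le> a * a''" using assms by simp
    show "3 * b'^2 \<le> b * b''" using assms by simp
    show "0 \<le> a * a''" using assms a'' by simp
    show "0 \<le> 3 * b'^2" by simp
  qed
  finally have xy: "x * y \<ge> (a' * b')^2" by (simp add: power_mult_distrib)
  have "(x + y)^2 \<ge> (2 * (a' * b'))^2"
  proof -
    have "(x + y)^2 = (x - y)^2 + 4 * (x * y)" by (simp add: power2_eq_square algebra_simps)
    also have "\<dots> \<ge> 4 * (a' * b')^2" using xy by (smt (verit) zero_le_power2)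
    finally show ?thesis by (simp add: power_mult_distrib)
  qed
  hence "x + y \<ge> \<bar>2 * (a' * b')\<bar>" using x y
    by (metis abs_le_square_iff abs_of_nonneg add_nonneg_nonneg)
  thus ?thesis using x_def y_def by linarith
qed


lemma convex_on_cong_pt:
  assumes "convex_on S f" "\<And>x. x \<in> S \<Longrightarrow> f x = g x"
  shows "convex_on S g"
  using assms unfolding convex_on_def convex_def by auto

lemma powr_32: "(u::real) > 0 \<Longrightarrow> u powr (3/2) = u * u powr (1/2)"
proof -
  assume "u > 0"
  have "u powr (3/2) = u powr (1 + 1/2)" by simp
  also have "\<dots> = u * u powr (1/2)" using \<open>u > 0\<close> by (simp only: powr_add powr_one_gt_zero_iff) simp
  finally show ?thesis .
qed

lemma powr_52: "(u::real) > 0 \<Longrightarrow> u powr (5/2) = u * u * u powr (1/2)"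
proof -
  assume "u > 0"
  have "u powr (5/2) = u powr (1 + 3/2)" by simp
  also have "\<dots> = u * u powr (3/2)" using \<open>u > 0\<close> by (simp only: powr_add) simp
  finally show ?thesis using powr_32[OF \<open>u > 0\<close>] by simp
qed

lemma a_ineq:
  fixes u u' u'' :: real
  assumes "u > 0" "u'' \<ge> 0"
  shows "3 * (u powr (3/2)) * (3/2 * (1/2 * u powr (-1/2) * u' * u' + u powr (1/2) * u''))
         \<ge> (3/2 * u powr (1/2) * u')^2"
proof -
  define p where "p = u powr (1/2)"
  have p: "p > 0" using assms by (simp add: p_def)
  have pp: "p * p = u" using assms by (simp add: p_def powr_half_sqrt)
  have e1: "u powr (3/2) = u * p" using assms by (simp add: p_def powr_32 powr_52)
  have e2: "u powr (-1/2) = 1 / p" using assms by (simp add: p_def powr_minus_divide powr_32 powr_52)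
  have "3 * (u * p) * (3/2 * (1/2 * (1/p) * u' * u' + p * u'')) = 9/4 * u * u'^2 + 9/2 * u * (p * p) * u''"
    using p by (simp add: field_simps power2_eq_square)
  also have "\<dots> \<ge> 9/4 * u * u'^2" using assms pp by simp
  also have "9/4 * u * u'^2 = (3/2 * p * u')^2" using pp by (simp add: power2_eq_square algebra_simps)
  finally show ?thesis unfolding e1 e2 p_def by simp
qed

lemma b_ineq:
  fixes v v' w :: real
  assumes "v > 0" "w \<ge> 0"
  shows "v powr (-1/2) * (3/4 * v powr (-5/2) * v'^2 + v powr (-3/2) * w)
         \<ge> 3 * (-1/2 * v powr (-3/2) * v')^2"
proof -
  define p where "p = v powr (1/2)"
  have p: "p > 0" using assms by (simp add: p_def)
  have pp: "p * p = v" using assms by (simp add: p_def powr_half_sqrt)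
  have e1: "v powr (-1/2) = 1 / p" using assms by (simp add: p_def powr_minus_divide)
  have e2: "v powr (-3/2) = 1 / (v * p)" using assms
    by (simp add: p_def powr_minus_divide powr_32 powr_52)
  have e3: "v powr (-5/2) = 1 / (v * v * p)" using assms
    by (simp add: p_def powr_minus_divide powr_32 powr_52)
  have "(1/p) * (3/4 * (1 / (v * v * p)) * v'^2 + (1 / (v * p)) * w) = 3/4 * v'^2 / (v * v * (p * p)) + w / (v * (p*p))"
    using p assms by (simp add: field_simps)
  also have "\<dots> = 3/4 * v'^2 / (v * v * v) + w / (v * v)" by (simp add: pp)
  also have "\<dots> \<ge> 3/4 * v'^2 / (v * v * v)" using assms by simp
  also have "3/4 * v'^2 / (v * v * v) = 3 * (-1/2 * (1 / (v * p)) * v')^2"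
    using p assms pp by (simp add: field_simps power2_eq_square)
  finally show ?thesis unfolding e1 e2 e3 by simp
qed

lemma prod_convex:
  fixes \<psi> E C :: real and I :: "real set"
  assumes I: "convex I" and pos: "\<And>Q. Q \<in> I \<Longrightarrow> exp (\<psi>*Q) - exp \<psi> > 0 \<and> E - C/Q > 0 \<and> Q > 0"
    and psi: "\<psi> > 0" and C: "C > 0"
  shows "convex_on I (\<lambda>Q. (exp (\<psi>*Q) - exp \<psi>) powr (3/2) * (E - C/Q) powr (-1/2))"
proof -
  define A where "A = (\<lambda>Q. (exp (\<psi>*Q) - exp \<psi>) powr (3/2))"
  define A1 where "A1 = (\<lambda>Q. 3/2 * (exp (\<psi>*Q) - exp \<psi>) powr (1/2) * (\<psi> * exp (\<psi>*Q)))"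
  define A2 where "A2 = (\<lambda>Q. 3/2 * (1/2 * (exp (\<psi>*Q) - exp \<psi>) powr (-1/2) * (\<psi> * exp (\<psi>*Q)) * (\<psi> * exp (\<psi>*Q))
       + (exp (\<psi>*Q) - exp \<psi>) powr (1/2) * (\<psi> * (\<psi> * exp (\<psi>*Q)))))"
  define B where "B = (\<lambda>Q. (E - C/Q) powr (-1/2))"
  define B1 where "B1 = (\<lambda>Q. -1/2 * (E - C/Q) powr (-3/2) * (C/Q^2))"
  define B2 where "B2 = (\<lambda>Q. 3/4 * (E - C/Q) powr (-5/2) * (C/Q^2)^2 + (E - C/Q) powr (-3/2) * (C/Q^3))"
  have dA: "(A has_real_derivative A1 Q) (at Q)" if "Q \<in> I" for Q
    unfolding A_def A1_def using a_d1 pos[OF that] by blast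
  have dA1: "(A1 has_real_derivative A2 Q) (at Q)" if "Q \<in> I" for Q
    unfolding A1_def A2_def using a_d2 pos[OF that] by blast
  have dB: "(B has_real_derivative B1 Q) (at Q)" if "Q \<in> I" for Q
    unfolding B_def B1_def using b_d1 pos[OF that] by blast
  have dB1: "(B1 has_real_derivative B2 Q) (at Q)" if "Q \<in> I" for Q
    unfolding B1_def B2_def using b_d2 pos[OF that] by blast
  have "convex_on I (\<lambda>Q. A Q * B Q)"
  proof (rule f''_ge0_imp_convex[OF I])
    fix Q assume Q: "Q \<in> I"
    show "((\<lambda>Q. A Q * B Q) has_real_derivative (A Q * B1 Q + A1 Q * B Q)) (at Q)"
      by (rule DERIV_mult'[OF dA[OF Q] dB[OF Q]])
    show "((\<lambda>Q. A Q * B1 Q + A1 Q * B Q) has_real_derivative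
       ((A Q * B2 Q + A1 Q * B1 Q) + (A1 Q * B1 Q + A2 Q * B Q))) (at Q)"
      by (intro DERIV_add DERIV_mult' dA dA1 dB dB1 Q)
    have u: "exp (\<psi>*Q) - exp \<psi> > 0" and v: "E - C/Q > 0" and Qp: "Q > 0" using pos[OF Q] by auto
    have "A2 Q * B Q + 2 * A1 Q * B1 Q + A Q * B2 Q \<ge> 0"
    proof (rule prod_second_nonneg)
      show "A Q > 0" "B Q > 0" unfolding A_def B_def using u v by auto
      show "(A1 Q)^2 \<le> 3 * A Q * A2 Q" unfolding A_def A1_def A2_def
        by (rule a_ineq[OF u]) (use psi in simp)
      show "3 * (B1 Q)^2 \<le> B Q * B2 Q" unfolding B_def B1_def B2_def
        by (rule b_ineq[OF v]) (use C Qp in simp)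
    qed
    thus "0 \<le> (A Q * B2 Q + A1 Q * B1 Q) + (A1 Q * B1 Q + A2 Q * B Q)" by simp
  qed
  thus ?thesis unfolding A_def B_def .
qed

lemma beta_eq:
  fixes u v :: real
  assumes "u > 0" "v > 0"
  shows "sqrt (u^3 / v) = u powr (3/2) * v powr (-1/2)"
proof -
  have "sqrt (u^3 / v) = (u^3 / v) powr (1/2)" using assms by (simp add: powr_half_sqrt)
  also have "\<dots> = (u^3) powr (1/2) / v powr (1/2)" using assms by (simp add: powr_divide)
  also have "(u^3) powr (1/2) = u powr (3/2)"
  proof -
    have "(u^3) powr (1/2) = (u powr 3) powr (1/2)" using assms by (simp add: powr_numeral)
    also have "\<dots> = u powr (3/2)" by (simp add: powr_powr)
    finally show ?thesis .
  qed
  also have "u powr (3/2) / v powr (1/2) = u powr (3/2) * v powr (-1/2)"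
    using assms by (simp add: powr_minus_divide)
  finally show ?thesis .
qed
lemma inv_gamma_nonneg:
  fixes \<kappa> \<rho> :: real
  assumes k: "\<kappa> > 0" and r: "0 < \<rho>" "\<rho> < 1"
  shows "inv_lower_inc_gamma \<kappa> (Gamma \<kappa> * \<rho>) \<ge> 0"
proof -
  define f where "f = (\<lambda>t::real. t powr (\<kappa> - 1) * exp (- t))"
  define F where "F = (\<lambda>x. integral {0..x} f)"
  have F_eq: "lower_inc_gamma \<kappa> = F" unfolding F_def f_def lower_inc_gamma_def by (rule ext) simp
  have hi: "(f has_integral Gamma \<kappa>) {0..}"
    using Gamma_integral_real[OF k] unfolding f_def by (simp add: exp_minus field_simps)
  have fnn: "f t \<ge> 0" for t unfolding f_def by simp
  have si: "set_integrable lebesgue {0..} f"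
    using nonnegative_absolutely_integrable_1[of f "{0..}"] hi fnn by blast
  have sib: "set_integrable lebesgue {0..b} f" for b
    by (rule set_integrable_subset[OF si]) auto
  have intb: "f integrable_on {a..b}" if "0 \<le> a" for a b
    using set_lebesgue_integral_eq_integral(1)[OF set_integrable_subset[OF si, of "{a..b}"]] that by auto
  have lim0: "((\<lambda>b. set_lebesgue_integral lebesgue {0..b} f) \<longlongrightarrow> set_lebesgue_integral lebesgue {0..} f) at_top"
    by (rule tendsto_set_lebesgue_integral_at_top[OF _ si]) auto
  have "set_lebesgue_integral lebesgue {0..} f = Gamma \<kappa>"
    using set_lebesgue_integral_eq_integral(2)[OF si] hi by (simp add: integral_unique)
  moreover have "set_lebesgue_integral lebesgue {0..b} f = F b" for b
    unfolding F_def using set_lebesgue_integral_eq_integral(2)[OF sib] .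
  ultimately have lim: "(F \<longlongrightarrow> Gamma \<kappa>) at_top" using lim0 by simp
  have G: "Gamma \<kappa> > 0" using k by (simp add: Gamma_real_pos)
  have "Gamma \<kappa> * \<rho> < Gamma \<kappa>" using G r by simp
  hence "eventually (\<lambda>b. F b > Gamma \<kappa> * \<rho>) at_top" using lim by (simp add: order_tendstoD(1))
  hence "eventually (\<lambda>b. F b > Gamma \<kappa> * \<rho> \<and> b \<ge> 0) at_top"
    by (intro eventually_conj eventually_ge_at_top)
  then obtain b where b: "F b > Gamma \<kappa> * \<rho>" "b \<ge> 0" by (auto simp: eventually_at_top_linorder)
  have F0: "F 0 = 0" unfolding F_def by simp
  have contF: "continuous_on {0..b} F"
    unfolding F_def by (rule indefinite_integral_continuous_1[OF intb]) simp
  obtain x where x: "x \<in> {0..b}" "F x = Gamma \<kappa> * \<rho>"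
    using IVT'[of F 0 "Gamma \<kappa> * \<rho>" b, OF _ _ _ contF] F0 b G r by auto
  have strict: "F x < F y" if xy: "0 \<le> x" "x < y" for x y
  proof -
    define m where "m = (x + y) / 2"
    have m: "x < m" "m < y" "0 < m" using xy by (auto simp: m_def)
    have comb: "F x + integral {x..y} f = F y"
      unfolding F_def by (rule Henstock_Kurzweil_Integration.integral_combine) (use xy intb in auto)
    have sub: "integral {m..y} f \<le> integral {x..y} f"
      by (rule integral_subset_le) (use m xy intb fnn in auto)
    have cont: "continuous_on {m..y} f"
      unfolding f_def using m by (auto intro!: continuous_intros)
    have pos: "integral {m..y} f > 0"
    proof (rule ccontr)
      assume "\<not> integral {m..y} f > 0"
      moreover have "integral {m..y} f \<ge> 0" by (rule integral_nonneg) (use intb m fnn in auto)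
      ultimately have z: "integral {m..y} f = 0" by simp
      have "(f has_integral 0) (cbox m y)"
        using intb[of m y] m z by (simp add: has_integral_integral)
      hence "f ((m + y)/2) = 0"
        by (rule has_integral_0_cbox_imp_0[rotated 2]) (use cont fnn m in auto)
      moreover have "f ((m + y)/2) > 0" unfolding f_def using m by simp
      ultimately show False by simp
    qed
    show ?thesis using comb sub pos by simp
  qed
  have ex1: "\<exists>!x. 0 \<le> x \<and> F x = Gamma \<kappa> * \<rho>"
  proof (rule ex1I[of _ x])
    show "0 \<le> x \<and> F x = Gamma \<kappa> * \<rho>" using x by auto
    fix y assume y: "0 \<le> y \<and> F y = Gamma \<kappa> * \<rho>"
    show "y = x"
    proof (rule ccontr)
      assume "y \<noteq> x"
      hence "y < x \<or> x < y" by auto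
      thus False using strict[of y x] strict[of x y] x y by auto
    qed
  qed
  show ?thesis unfolding inv_lower_inc_gamma_def F_eq using theI'[OF ex1] by blast
qed

theorem mainTheorem3:
  fixes K \<psi> Emax C :: real and I :: "real set"
  assumes "K > 0" and "\<psi> > 0" and "Emax > 0" and "C > 0"
    and "is_interval I"
    and "\<forall>Q\<in>I. Q > max 1 (C / Emax)"
    and "\<forall>Q\<in>I. 3 * \<psi>^2 * exp \<psi> * Q^2 - 2 * Q * Emax + C \<ge> 0"
  shows "convex_on I (beta_fun K \<psi> Emax C)
    \<and> (\<forall>\<kappa> \<rho>. \<kappa> > 0 \<and> 0 < \<rho> \<and> \<rho> < 1 \<longrightarrow>
          convex_on I (\<lambda>Q. gamma_quantile \<kappa> (beta_fun K \<psi> Emax C Q) \<rho>))"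
proof -
  have I: "convex I" using assms(5) by (rule is_interval_convex)
  have pos: "exp (\<psi>*Q) - exp \<psi> > 0 \<and> Emax - C/Q > 0 \<and> Q > 0" if "Q \<in> I" for Q
  proof -
    have Q: "Q > 1" "Q > C / Emax" using assms(6) that by auto
    have "\<psi> < \<psi> * Q" using Q assms(2) by simp
    hence "exp \<psi> < exp (\<psi> * Q)" by simp
    moreover have "C / Q < Emax" using Q assms(3) by (simp add: field_simps)
    ultimately show ?thesis using Q by simp
  qed
  have c1: "convex_on I (\<lambda>Q. K * ((exp (\<psi>*Q) - exp \<psi>) powr (3/2) * (Emax - C/Q) powr (-1/2)))"
    using prod_convex[OF I pos assms(2) assms(4)] assms(1) by (intro convex_on_cmul) auto
  have cb: "convex_on I (beta_fun K \<psi> Emax C)"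
  proof (rule convex_on_cong_pt[OF c1])
    fix Q assume "Q \<in> I"
    thus "K * ((exp (\<psi>*Q) - exp \<psi>) powr (3/2) * (Emax - C/Q) powr (-1/2)) = beta_fun K \<psi> Emax C Q"
      using pos beta_eq unfolding beta_fun_def by simp
  qed
  have "convex_on I (\<lambda>Q. gamma_quantile \<kappa> (beta_fun K \<psi> Emax C Q) \<rho>)"
    if "\<kappa> > 0" "0 < \<rho>" "\<rho> < 1" for \<kappa> \<rho>
  proof -
    have "convex_on I (\<lambda>Q. inv_lower_inc_gamma \<kappa> (Gamma \<kappa> * \<rho>) * beta_fun K \<psi> Emax C Q)"
      using inv_gamma_nonneg[OF that] cb by (intro convex_on_cmul) auto
    thus ?thesis unfolding gamma_quantile_def by (simp add: mult.commute)
  qed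
  with cb show ?thesis by blast
qed

end
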